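(* Let $G$ be a finite abelian group of order $n$ and $S\subset G^n$ the set of bijections $\{1,\dots,n\}\to G$. If $\chi\in\hat G^n$ has exactly $m$ nontrivial coordinates, where $m\le n/2$, then \[ |\widehat{1_S}(\chi)|\le \binom{n}{m}^{-1/2}\frac{n!}{n^n}. \]
   Context: $\hat G$ is the dual group of $G$. For $\chi=(\chi_1,\dots,\chi_n)\in\hat G^n$, $\widehat{1_S}(\chi)=\frac{1}{n^n}\sum_{\pi\in S}\prod_{i=1}^n\chi_i(\pi(i))$. *)

theory Defs
  imports "HOL-Algebra.Algebra" Complex_Main
begin

definition character :: "('a, 'b) monoid_scheme \<Rightarrow> ('a \<Rightarrow> complex) \<Rightarrow> bool" where
  "character G \<chi> \<longleftrightarrow>
     (\<forall>x\<in>carrier G. cmod (\<chi> x) = 1) \<and>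
     (\<forall>x\<in>carrier G. \<forall>y\<in>carrier G. \<chi> (x \<otimes>\<^bsub>G\<^esub> y) = \<chi> x * \<chi> y)"

definition trivial_character :: "('a, 'b) monoid_scheme \<Rightarrow> ('a \<Rightarrow> complex) \<Rightarrow> bool" where
  "trivial_character G \<chi> \<longleftrightarrow> (\<forall>x\<in>carrier G. \<chi> x = 1)"

definition bijections :: "nat \<Rightarrow> ('a, 'b) monoid_scheme \<Rightarrow> (nat \<Rightarrow> 'a) set" where
  "bijections n G = {\<pi>. \<pi> \<in> extensional {1..n} \<and> bij_betw \<pi> {1..n} (carrier G)}"

definition fourier_1S :: "nat \<Rightarrow> ('a, 'b) monoid_scheme \<Rightarrow> (nat \<Rightarrow> 'a \<Rightarrow> complex) \<Rightarrow> complex" where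
  "fourier_1S n G \<chi> = (1 / of_nat n ^ n) * (\<Sum>\<pi>\<in>bijections n G. \<Prod>i\<in>{1..n}. \<chi> i (\<pi> i))"

end

theory Submission
  imports Defs
begin

definition injs :: "('a, 'b) monoid_scheme \<Rightarrow> nat set \<Rightarrow> (nat \<Rightarrow> 'a) set" where
  "injs G T = {f \<in> PiE T (\<lambda>_. carrier G). inj_on f T}"

definition Ssum :: "('a, 'b) monoid_scheme \<Rightarrow> nat set \<Rightarrow> (nat \<Rightarrow> 'a \<Rightarrow> complex) \<Rightarrow> complex" where
  "Ssum G T \<chi> = (\<Sum>f\<in>injs G T. \<Prod>i\<in>T. \<chi> i (f i))"

definition ffr :: "nat \<Rightarrow> nat \<Rightarrow> real" where
  "ffr n m = (\<Prod>k<m. real (n - k))"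

lemma finite_injs: "finite T \<Longrightarrow> finite (carrier G) \<Longrightarrow> finite (injs G T)"
  unfolding injs_def by (rule finite_subset[OF _ finite_PiE]) auto

lemma char_sum_zero:
  assumes "group G" "finite (carrier G)" "character G \<chi>" "\<not> trivial_character G \<chi>"
  shows "(\<Sum>g\<in>carrier G. \<chi> g) = 0"
proof -
  interpret group G by fact
  obtain h where h: "h \<in> carrier G" "\<chi> h \<noteq> 1" using assms(4) unfolding trivial_character_def by auto
  have "(\<Sum>g\<in>carrier G. \<chi> g) = (\<Sum>g\<in>carrier G. \<chi> (h \<otimes>\<^bsub>G\<^esub> g))"
    by (rule sum.reindex_bij_witness[where j="\<lambda>g. inv\<^bsub>G\<^esub> h \<otimes>\<^bsub>G\<^esub> g" and i="\<lambda>g. h \<otimes>\<^bsub>G\<^esub> g"])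
       (simp_all add: h(1) m_assoc[symmetric])
  also have "\<dots> = \<chi> h * (\<Sum>g\<in>carrier G. \<chi> g)"
    using assms(3) h unfolding character_def by (simp add: sum_distrib_left)
  finally have "(1 - \<chi> h) * (\<Sum>g\<in>carrier G. \<chi> g) = 0" by (simp add: algebra_simps)
  with h show ?thesis by simp
qed

lemma injs_decomp:
  assumes "finite T" "finite (carrier G)" "t \<notin> T"
  shows "sum H (injs G (insert t T)) = (\<Sum>f\<in>injs G T. \<Sum>g\<in>carrier G - f ` T. H (f(t:=g)))"
proof -
  have "(\<Sum>f\<in>injs G T. \<Sum>g\<in>carrier G - f ` T. H (f(t:=g))) =
        (\<Sum>p\<in>Sigma (injs G T) (\<lambda>f. carrier G - f ` T). H ((fst p)(t := snd p)))"
    using assms by (subst sum.Sigma) (auto simp: finite_injs split_def)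
  also have "\<dots> = sum H (injs G (insert t T))"
  proof (rule sum.reindex_bij_witness[where i="\<lambda>f. (f(t:=undefined), f t)" and j="\<lambda>p. (fst p)(t := snd p)"])
    fix p assume p: "p \<in> Sigma (injs G T) (\<lambda>f. carrier G - f ` T)"
    obtain f g where fg: "p = (f, g)" by (cases p)
    from p fg have f: "f \<in> injs G T" and g: "g \<in> carrier G" "g \<notin> f ` T" by auto
    from f have fe: "f \<in> extensional T" and fP: "\<forall>i\<in>T. f i \<in> carrier G" and fi: "inj_on f T"
      unfolding injs_def PiE_def by auto
    have ft: "f t = undefined" using fe assms(3) by (simp add: extensional_def)
    show "(((fst p)(t := snd p))(t := undefined), ((fst p)(t := snd p)) t) = p"
      using ft fg by (simp add: fun_eq_iff)
    have "f(t := g) \<in> extensional (insert t T)" using fe by (simp add: extensional_def)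
    moreover have "\<forall>i\<in>insert t T. (f(t := g)) i \<in> carrier G" using fP g by simp
    moreover have "inj_on (f(t := g)) (insert t T)"
      using fi g assms(3) by (auto simp: inj_on_def)
    ultimately show "(fst p)(t := snd p) \<in> injs G (insert t T)"
      using fg unfolding injs_def PiE_def Pi_def by simp
  next
    fix f assume "f \<in> injs G (insert t T)"
    then show "(fst (f(t := undefined), f t))(t := snd (f(t := undefined), f t)) = f" by simp
  next
    fix f assume f: "f \<in> injs G (insert t T)"
    from f have fe: "f \<in> extensional (insert t T)" and fP: "\<forall>i\<in>insert t T. f i \<in> carrier G"
      and fi: "inj_on f (insert t T)"
      unfolding injs_def PiE_def by auto
    have "f(t := undefined) \<in> extensional T" using fe by (simp add: extensional_def)
    moreover have "\<forall>i\<in>T. (f(t := undefined)) i \<in> carrier G" using fP assms(3) by auto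
    moreover have "inj_on (f(t := undefined)) T"
      using fi assms(3) by (simp add: inj_on_def)
    ultimately have "f(t := undefined) \<in> injs G T" unfolding injs_def PiE_def Pi_def by simp
    moreover have "f t \<in> carrier G" using fP by simp
    moreover have "f t \<notin> (f(t := undefined)) ` T"
    proof
      assume "f t \<in> (f(t := undefined)) ` T"
      then obtain i where i: "i \<in> T" "f t = (f(t := undefined)) i" by blast
      then have "f t = f i" using assms(3) by auto
      with fi i(1) assms(3) show False by (auto simp: inj_on_def)
    qed
    ultimately show "(f(t := undefined), f t) \<in> Sigma (injs G T) (\<lambda>f. carrier G - f ` T)" by simp
  qed (rule refl)
  finally show ?thesis by simp
qed


lemma prod_upd:
  assumes "finite T" "s \<in> T"
  shows "(\<Prod>i\<in>T. (\<chi>(s := \<psi>)) i (f i)) = \<psi> (f s) * (\<Prod>i\<in>T-{s}. \<chi> i (f i))"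
proof -
  have "(\<Prod>i\<in>T. (\<chi>(s := \<psi>)) i (f i)) = (\<chi>(s := \<psi>)) s (f s) * (\<Prod>i\<in>T-{s}. (\<chi>(s := \<psi>)) i (f i))"
    using assms by (rule prod.remove)
  also have "(\<Prod>i\<in>T-{s}. (\<chi>(s := \<psi>)) i (f i)) = (\<Prod>i\<in>T-{s}. \<chi> i (f i))"
    by (rule prod.cong) auto
  finally show ?thesis by simp
qed

lemma Ssum_insert:
  assumes "group G" "finite (carrier G)" "finite T" "t \<notin> T"
    and "character G (\<chi> t)" "\<not> trivial_character G (\<chi> t)"
  shows "Ssum G (insert t T) \<chi> = - (\<Sum>s\<in>T. Ssum G T (\<chi>(s := \<lambda>x. \<chi> s x * \<chi> t x)))"
proof -
  have "Ssum G (insert t T) \<chi> = (\<Sum>f\<in>injs G T. \<Sum>g\<in>carrier G - f ` T. \<Prod>i\<in>insert t T. \<chi> i ((f(t:=g)) i))"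
    unfolding Ssum_def using assms by (simp add: injs_decomp)
  also have "\<dots> = (\<Sum>f\<in>injs G T. (\<Prod>i\<in>T. \<chi> i (f i)) * (\<Sum>g\<in>carrier G - f ` T. \<chi> t g))"
  proof (rule sum.cong[OF refl])
    fix f assume f: "f \<in> injs G T"
    have "(\<Sum>g\<in>carrier G - f ` T. \<Prod>i\<in>insert t T. \<chi> i ((f(t:=g)) i))
        = (\<Sum>g\<in>carrier G - f ` T. \<chi> t g * (\<Prod>i\<in>T. \<chi> i (f i)))"
    proof (rule sum.cong[OF refl])
      fix g
      have "(\<Prod>i\<in>T. \<chi> i ((f(t:=g)) i)) = (\<Prod>i\<in>T. \<chi> i (f i))"
        by (rule prod.cong) (use assms(4) in auto)
      then show "(\<Prod>i\<in>insert t T. \<chi> i ((f(t:=g)) i)) = \<chi> t g * (\<Prod>i\<in>T. \<chi> i (f i))"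
        using assms(3,4) by simp
    qed
    then show "(\<Sum>g\<in>carrier G - f ` T. \<Prod>i\<in>insert t T. \<chi> i ((f(t:=g)) i))
        = (\<Prod>i\<in>T. \<chi> i (f i)) * (\<Sum>g\<in>carrier G - f ` T. \<chi> t g)"
      by (simp add: sum_distrib_left mult.commute)
  qed
  also have "\<dots> = (\<Sum>f\<in>injs G T. (\<Prod>i\<in>T. \<chi> i (f i)) * (- (\<Sum>s\<in>T. \<chi> t (f s))))"
  proof (rule sum.cong[OF refl])
    fix f assume f: "f \<in> injs G T"
    then have sub: "f ` T \<subseteq> carrier G" and inj: "inj_on f T" by (auto simp: injs_def)
    have "(\<Sum>g\<in>carrier G - f ` T. \<chi> t g) = (\<Sum>g\<in>carrier G. \<chi> t g) - (\<Sum>g\<in>f ` T. \<chi> t g)"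
      using sub assms(2) by (simp add: sum_diff)
    also have "\<dots> = - (\<Sum>s\<in>T. \<chi> t (f s))"
      using char_sum_zero[OF assms(1,2,5,6)] inj by (simp add: sum.reindex)
    finally show "(\<Prod>i\<in>T. \<chi> i (f i)) * (\<Sum>g\<in>carrier G - f ` T. \<chi> t g)
        = (\<Prod>i\<in>T. \<chi> i (f i)) * (- (\<Sum>s\<in>T. \<chi> t (f s)))" by simp
  qed
  also have "\<dots> = - (\<Sum>f\<in>injs G T. \<Sum>s\<in>T. (\<Prod>i\<in>T. \<chi> i (f i)) * \<chi> t (f s))"
    by (simp add: sum_distrib_left sum_negf)
  also have "\<dots> = - (\<Sum>s\<in>T. \<Sum>f\<in>injs G T. (\<Prod>i\<in>T. \<chi> i (f i)) * \<chi> t (f s))"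
    by (subst sum.swap) simp
  also have "\<dots> = - (\<Sum>s\<in>T. Ssum G T (\<chi>(s := \<lambda>x. \<chi> s x * \<chi> t x)))"
  proof -
    have "(\<Sum>f\<in>injs G T. (\<Prod>i\<in>T. \<chi> i (f i)) * \<chi> t (f s)) = Ssum G T (\<chi>(s := \<lambda>x. \<chi> s x * \<chi> t x))"
      if s: "s \<in> T" for s
      unfolding Ssum_def
    proof (rule sum.cong[OF refl])
      fix f
      show "(\<Prod>i\<in>T. \<chi> i (f i)) * \<chi> t (f s) = (\<Prod>i\<in>T. (\<chi>(s := \<lambda>x. \<chi> s x * \<chi> t x)) i (f i))"
        using prod_upd[OF assms(3) s, of \<chi> "\<lambda>x. \<chi> s x * \<chi> t x" f]
          prod.remove[OF assms(3) s, of "\<lambda>i. \<chi> i (f i)"]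
        by (simp add: algebra_simps)
    qed
    then show ?thesis by simp
  qed
  finally show ?thesis .
qed

lemma Ssum_insert_triv:
  assumes "finite (carrier G)" "finite T" "u \<notin> T" "\<forall>x\<in>carrier G. \<chi> u x = 1"
  shows "Ssum G (insert u T) \<chi> = of_nat (card (carrier G) - card T) * Ssum G T \<chi>"
proof -
  have "Ssum G (insert u T) \<chi> = (\<Sum>f\<in>injs G T. \<Sum>g\<in>carrier G - f ` T. \<Prod>i\<in>insert u T. \<chi> i ((f(u:=g)) i))"
    unfolding Ssum_def using assms by (simp add: injs_decomp)
  also have "\<dots> = (\<Sum>f\<in>injs G T. of_nat (card (carrier G) - card T) * (\<Prod>i\<in>T. \<chi> i (f i)))"
  proof (rule sum.cong[OF refl])
    fix f assume f: "f \<in> injs G T"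
    then have sub: "f ` T \<subseteq> carrier G" and inj: "inj_on f T" by (auto simp: injs_def)
    have "(\<Sum>g\<in>carrier G - f ` T. \<Prod>i\<in>insert u T. \<chi> i ((f(u:=g)) i))
        = (\<Sum>g\<in>carrier G - f ` T. (\<Prod>i\<in>T. \<chi> i (f i)))"
    proof (rule sum.cong[OF refl])
      fix g assume g: "g \<in> carrier G - f ` T"
      have "(\<Prod>i\<in>T. \<chi> i ((f(u:=g)) i)) = (\<Prod>i\<in>T. \<chi> i (f i))"
        by (rule prod.cong) (use assms(3) in auto)
      then show "(\<Prod>i\<in>insert u T. \<chi> i ((f(u:=g)) i)) = (\<Prod>i\<in>T. \<chi> i (f i))"
        using assms g by simp
    qed
    also have "\<dots> = of_nat (card (carrier G - f ` T)) * (\<Prod>i\<in>T. \<chi> i (f i))" by simp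
    also have "card (carrier G - f ` T) = card (carrier G) - card T"
      using sub inj assms(1,2) by (simp add: card_Diff_subset card_image finite_subset)
    finally show "(\<Sum>g\<in>carrier G - f ` T. \<Prod>i\<in>insert u T. \<chi> i ((f(u:=g)) i))
        = of_nat (card (carrier G) - card T) * (\<Prod>i\<in>T. \<chi> i (f i))" .
  qed
  also have "\<dots> = of_nat (card (carrier G) - card T) * Ssum G T \<chi>"
    unfolding Ssum_def by (simp add: sum_distrib_left)
  finally show ?thesis .
qed

lemma Ssum_union_triv:
  assumes "finite (carrier G)" "finite U" "finite T" "T \<inter> U = {}"
    and "\<forall>u\<in>U. \<forall>x\<in>carrier G. \<chi> u x = 1"
  shows "Ssum G (T \<union> U) \<chi> = (\<Prod>j<card U. of_nat (card (carrier G) - card T - j)) * Ssum G T \<chi>"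
  using assms(2,4,5)
proof (induction U rule: finite_induct)
  case empty
  then show ?case by simp
next
  case (insert u U)
  have "Ssum G (T \<union> insert u U) \<chi> = Ssum G (insert u (T \<union> U)) \<chi>" by simp
  also have "\<dots> = of_nat (card (carrier G) - card (T \<union> U)) * Ssum G (T \<union> U) \<chi>"
    using insert assms(1,3) by (intro Ssum_insert_triv) auto
  also have "card (T \<union> U) = card T + card U"
    using insert assms(3) by (intro card_Un_disjoint) auto
  also have "Ssum G (T \<union> U) \<chi> = (\<Prod>j<card U. of_nat (card (carrier G) - card T - j)) * Ssum G T \<chi>"
    using insert by auto
  finally show ?case using insert by (simp add: algebra_simps)
qed


lemma Ssum_empty: "Ssum G {} \<chi> = 1"
proof -
  have "injs G {} = {\<lambda>_. undefined}" unfolding injs_def by auto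
  then show ?thesis unfolding Ssum_def by simp
qed

lemma ffr_Suc: "ffr n (Suc k) = ffr n k * real (n - k)"
  unfolding ffr_def by simp

lemma ffr_nonneg: "ffr n k \<ge> 0"
  unfolding ffr_def by (rule prod_nonneg) auto

lemma key_ineq:
  fixes j n :: nat
  assumes "2 * j + 2 \<le> n"
  shows "real (Suc j) * max (sqrt (fact (Suc j) * ffr n (Suc j))) (real (n - j) * sqrt (fact j * ffr n j))
     \<le> sqrt (fact (Suc (Suc j)) * ffr n (Suc (Suc j)))"
proof -
  define P where "P = fact j * ffr n j"
  have P0: "P \<ge> 0" unfolding P_def using ffr_nonneg by simp
  define x where "x = real n - real j"
  have x1: "real (n - j) = x" "real (n - Suc j) = x - 1" using assms unfolding x_def by auto
  have xj: "x \<ge> real j + 2" using assms unfolding x_def by linarith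
  have A: "fact (Suc j) * ffr n (Suc j) = (real j + 1) * x * P"
    unfolding P_def by (simp add: ffr_Suc x1 algebra_simps)
  have T: "fact (Suc (Suc j)) * ffr n (Suc (Suc j)) = (real j + 2) * (real j + 1) * x * (x - 1) * P"
    unfolding P_def by (simp add: ffr_Suc x1 algebra_simps)
  have sq: "real (Suc j) * sqrt z = sqrt ((real j + 1)^2 * z)" for z
    by (simp add: real_sqrt_mult)
  have sq2: "real (Suc j) * (x * sqrt z) = sqrt ((real j + 1)^2 * x^2 * z)" for z
    using xj by (simp add: real_sqrt_mult)
  have i1: "(real j + 1)^2 * ((real j + 1) * x * P) \<le> (real j + 2) * (real j + 1) * x * (x - 1) * P"
  proof -
    have "(real j + 1) * (real j + 1) \<le> (real j + 2) * (x - 1)"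
      using xj by (intro mult_mono) auto
    then have "((real j + 1) * (real j + 1)) * ((real j + 1) * x * P) \<le> ((real j + 2) * (x - 1)) * ((real j + 1) * x * P)"
      using xj P0 by (intro mult_right_mono) auto
    then show ?thesis by (simp add: power2_eq_square algebra_simps)
  qed
  have i2: "(real j + 1)^2 * x^2 * P \<le> (real j + 2) * (real j + 1) * x * (x - 1) * P"
  proof -
    have "(real j + 1) * x \<le> (real j + 2) * (x - 1)"
      using xj by (simp add: algebra_simps)
    then have "((real j + 1) * x) * ((real j + 1) * x * P) \<le> ((real j + 2) * (x - 1)) * ((real j + 1) * x * P)"
      using xj P0 by (intro mult_right_mono) auto
    then show ?thesis by (simp add: power2_eq_square algebra_simps)
  qed
  have b1: "real (Suc j) * sqrt (fact (Suc j) * ffr n (Suc j)) \<le> sqrt (fact (Suc (Suc j)) * ffr n (Suc (Suc j)))"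
    unfolding A T sq using i1 by simp
  have b2: "real (Suc j) * (real (n - j) * sqrt (fact j * ffr n j)) \<le> sqrt (fact (Suc (Suc j)) * ffr n (Suc (Suc j)))"
    unfolding T x1(1) sq2 P_def[symmetric] using i2 by simp
  show ?thesis using b1 b2 by (simp add: max_mult_distrib_left)
qed


lemma character_mult:
  assumes "character G \<phi>" "character G \<psi>"
  shows "character G (\<lambda>x. \<phi> x * \<psi> x)"
  using assms unfolding character_def by (simp add: norm_mult)

lemma main_bound:
  assumes grp: "group G" and fin: "finite (carrier G)" and cn: "card (carrier G) = n"
  shows "\<forall>T \<chi>. finite T \<and> card T = m \<and> 2 * m \<le> n + 2 \<and>
           (\<forall>i\<in>T. character G (\<chi> i) \<and> \<not> trivial_character G (\<chi> i)) \<longrightarrow>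
           cmod (Ssum G T \<chi>) \<le> sqrt (fact m * ffr n m)"
proof (induction m rule: less_induct)
  case (less m)
  show ?case
  proof (intro allI impI, elim conjE)
    fix T and \<chi> :: "nat \<Rightarrow> 'a \<Rightarrow> complex"
    assume fT: "finite T" and cT: "card T = m" and mn: "2 * m \<le> n + 2"
      and ch: "\<forall>i\<in>T. character G (\<chi> i) \<and> \<not> trivial_character G (\<chi> i)"
    show "cmod (Ssum G T \<chi>) \<le> sqrt (fact m * ffr n m)"
    proof (cases m)
      case 0
      then have "T = {}" using fT cT by simp
      then show ?thesis using 0 by (simp add: Ssum_empty ffr_def)
    next
      case (Suc k)
      then obtain t T' where TT: "T = insert t T'" "t \<notin> T'" "card T' = k" "finite T'"
        using cT fT card_Suc_eq[of T k] by auto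
      have eq: "Ssum G T \<chi> = - (\<Sum>s\<in>T'. Ssum G T' (\<chi>(s := \<lambda>x. \<chi> s x * \<chi> t x)))"
        unfolding TT(1) using ch TT by (intro Ssum_insert[OF grp fin]) auto
      show ?thesis
      proof (cases k)
        case 0
        then have "T' = {}" using TT by simp
        then show ?thesis using eq ffr_nonneg[of n m] by simp
      next
        case (Suc j)
        define Bd where "Bd = max (sqrt (fact (Suc j) * ffr n (Suc j))) (real (n - j) * sqrt (fact j * ffr n j))"
        have bnd: "cmod (Ssum G T' (\<chi>(s := \<lambda>x. \<chi> s x * \<chi> t x))) \<le> Bd" if s: "s \<in> T'" for s
        proof -
          define \<chi>' where "\<chi>' = \<chi>(s := \<lambda>x. \<chi> s x * \<chi> t x)"
          have chs: "character G (\<chi>' s)" unfolding \<chi>'_def using ch s TT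
            by (auto intro: character_mult)
          show ?thesis
          proof (cases "trivial_character G (\<chi>' s)")
            case False
            have chT': "\<forall>i\<in>T'. character G (\<chi>' i) \<and> \<not> trivial_character G (\<chi>' i)"
            proof
              fix i assume i: "i \<in> T'"
              show "character G (\<chi>' i) \<and> \<not> trivial_character G (\<chi>' i)"
              proof (cases "i = s")
                case True
                then show ?thesis using chs False by simp
              next
                case False
                then have "\<chi>' i = \<chi> i" unfolding \<chi>'_def by simp
                then show ?thesis using ch i TT(1) by simp
              qed
            qed
            have km: "k < m" using \<open>m = Suc k\<close> by simp
            have H: "\<forall>T \<chi>. finite T \<and> card T = k \<and> 2 * k \<le> n + 2 \<and>
               (\<forall>i\<in>T. character G (\<chi> i) \<and> \<not> trivial_character G (\<chi> i)) \<longrightarrow>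
               cmod (Ssum G T \<chi>) \<le> sqrt (fact k * ffr n k)"
              by (rule less.IH[OF km])
            have mnk: "2 * k \<le> n + 2" using mn \<open>m = Suc k\<close> by simp
            have "cmod (Ssum G T' \<chi>') \<le> sqrt (fact k * ffr n k)"
              using H TT(3,4) mnk chT' by blast
            then show ?thesis unfolding Bd_def \<chi>'_def using Suc by simp
          next
            case True
            have T'eq: "T' = insert s (T' - {s})" using s by auto
            have "Ssum G (insert s (T' - {s})) \<chi>' = of_nat (card (carrier G) - card (T' - {s})) * Ssum G (T' - {s}) \<chi>'"
              by (rule Ssum_insert_triv) (use True TT(4) fin in \<open>auto simp: trivial_character_def\<close>)
            then have "Ssum G T' \<chi>' = of_nat (n - card (T' - {s})) * Ssum G (T' - {s}) \<chi>'"
              using T'eq cn by simp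
            also have "card (T' - {s}) = j" using s TT Suc by simp
            also have "Ssum G (T' - {s}) \<chi>' = Ssum G (T' - {s}) \<chi>"
              unfolding Ssum_def \<chi>'_def by (intro sum.cong refl prod.cong) auto
            finally have e2: "Ssum G T' \<chi>' = of_nat (n - j) * Ssum G (T' - {s}) \<chi>" .
            have jm: "j < m" using \<open>m = Suc k\<close> Suc by simp
            have H: "\<forall>T \<chi>. finite T \<and> card T = j \<and> 2 * j \<le> n + 2 \<and>
               (\<forall>i\<in>T. character G (\<chi> i) \<and> \<not> trivial_character G (\<chi> i)) \<longrightarrow>
               cmod (Ssum G T \<chi>) \<le> sqrt (fact j * ffr n j)"
              by (rule less.IH[OF jm])
            have mnj: "2 * j \<le> n + 2" using mn \<open>m = Suc k\<close> Suc by simp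
            have cj: "card (T' - {s}) = j" "finite (T' - {s})" using s TT Suc by auto
            have chj: "\<forall>i\<in>T' - {s}. character G (\<chi> i) \<and> \<not> trivial_character G (\<chi> i)"
              using ch TT(1) by auto
            have "cmod (Ssum G (T' - {s}) \<chi>) \<le> sqrt (fact j * ffr n j)"
              using H cj mnj chj by blast
            then have "cmod (Ssum G T' \<chi>') \<le> real (n - j) * sqrt (fact j * ffr n j)"
              unfolding e2 by (simp add: norm_mult mult_left_mono)
            then show ?thesis unfolding Bd_def \<chi>'_def by simp
          qed
        qed
        have "cmod (Ssum G T \<chi>) \<le> (\<Sum>s\<in>T'. cmod (Ssum G T' (\<chi>(s := \<lambda>x. \<chi> s x * \<chi> t x))))"
          unfolding eq norm_minus_cancel by (rule norm_sum)
        also have "\<dots> \<le> real (card T') * Bd"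
          using bnd by (rule sum_bounded_above)
        also have "\<dots> \<le> sqrt (fact m * ffr n m)"
          using key_ineq[of j n] TT(3) Suc \<open>m = Suc k\<close> mn unfolding Bd_def by simp
        finally show ?thesis .
      qed
    qed
  qed
qed


lemma ffr_fact: "m \<le> n \<Longrightarrow> ffr n m * fact (n - m) = fact n"
proof (induction m)
  case 0
  then show ?case by (simp add: ffr_def)
next
  case (Suc m)
  have e: "n - m = Suc (n - Suc m)" using Suc.prems by simp
  have "ffr n (Suc m) * fact (n - Suc m) = ffr n m * (real (n - m) * fact (n - Suc m))"
    by (simp add: ffr_Suc)
  also have "real (n - m) * fact (n - Suc m) = (fact (n - m) :: real)"
    by (subst (2) e, subst fact_Suc) (simp add: e)
  finally show ?case using Suc by simp
qed

lemma bijections_injs: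
  assumes "finite (carrier G)" "card (carrier G) = n"
  shows "bijections n G = injs G {1..n}"
proof
  show "bijections n G \<subseteq> injs G {1..n}"
    unfolding bijections_def injs_def PiE_def bij_betw_def by auto
next
  show "injs G {1..n} \<subseteq> bijections n G"
  proof
    fix f assume f: "f \<in> injs G {1..n}"
    then have sub: "f ` {1..n} \<subseteq> carrier G" and inj: "inj_on f {1..n}" and ext: "f \<in> extensional {1..n}"
      unfolding injs_def PiE_def by auto
    have "card (f ` {1..n}) = card (carrier G)" using inj assms by (simp add: card_image)
    then have "f ` {1..n} = carrier G" using sub assms(1) by (intro card_subset_eq) auto
    then show "f \<in> bijections n G" unfolding bijections_def bij_betw_def using inj ext by auto
  qed
qed

lemma prod_rev_fact: "(\<Prod>j<k. (of_nat (k - j) :: complex)) = of_nat (fact k)"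
proof -
  have "(\<Prod>j<k. (of_nat (k - j) :: complex)) = of_nat (\<Prod>j<k. k - j)" by simp
  also have "(\<Prod>j<k. k - j) = (\<Prod>i = 0..<k. k - i)" by (simp add: lessThan_atLeast0)
  also have "\<dots> = fact k" by (simp add: fact_prod_rev[where 'a=nat])
  finally show ?thesis .
qed

theorem lemma4p1:
  fixes G :: "('a, 'b) monoid_scheme" and n m :: nat and \<chi> :: "nat \<Rightarrow> 'a \<Rightarrow> complex"
  assumes "comm_group G"
    and "finite (carrier G)"
    and "card (carrier G) = n"
    and "\<forall>i\<in>{1..n}. character G (\<chi> i)"
    and "card {i\<in>{1..n}. \<not> trivial_character G (\<chi> i)} = m"
    and "real m \<le> real n / 2"
  shows "cmod (fourier_1S n G \<chi>) \<le> 1 / sqrt (real (n choose m)) * (fact n / real n ^ n)"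
proof -
  interpret comm_group G by fact
  have grp: "group G" by (rule is_group)
  define T where "T = {i\<in>{1..n}. \<not> trivial_character G (\<chi> i)}"
  define U where "U = {1..n} - T"
  have TU: "{1..n} = T \<union> U" "T \<inter> U = {}" "finite T" "finite U" unfolding T_def U_def by auto
  have cT: "card T = m" using assms(5) T_def by simp
  have mn: "m \<le> n" using assms(6) by linarith
  have cU: "card U = n - m" unfolding U_def using cT by (subst card_Diff_subset) (auto simp: T_def)
  have trivU: "\<forall>u\<in>U. \<forall>x\<in>carrier G. \<chi> u x = 1"
    unfolding U_def T_def trivial_character_def by auto
  have "Ssum G {1..n} \<chi> = (\<Prod>j<card U. of_nat (card (carrier G) - card T - j)) * Ssum G T \<chi>"
    unfolding TU(1) by (rule Ssum_union_triv) (use assms(2) TU trivU in auto)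
  also have "(\<Prod>j<card U. (of_nat (card (carrier G) - card T - j) :: complex)) = of_nat (fact (n - m))"
    using prod_rev_fact[of "n - m"] by (simp add: cU cT assms(3))
  finally have eqS: "Ssum G {1..n} \<chi> = of_nat (fact (n - m)) * Ssum G T \<chi>" .
  have four0: "fourier_1S n G \<chi> = (1 / of_nat n ^ n) * Ssum G {1..n} \<chi>"
    unfolding fourier_1S_def bijections_injs[OF assms(2,3)] Ssum_def ..
  have four: "fourier_1S n G \<chi> = (1 / of_nat n ^ n) * (of_nat (fact (n - m)) * Ssum G T \<chi>)"
    unfolding four0 eqS ..
  have chT: "\<forall>i\<in>T. character G (\<chi> i) \<and> \<not> trivial_character G (\<chi> i)"
    using assms(4) unfolding T_def by auto
  have bound: "cmod (Ssum G T \<chi>) \<le> sqrt (fact m * ffr n m)"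
  proof -
    have H: "\<forall>T \<chi>. finite T \<and> card T = m \<and> 2 * m \<le> n + 2 \<and>
           (\<forall>i\<in>T. character G (\<chi> i) \<and> \<not> trivial_character G (\<chi> i)) \<longrightarrow>
           cmod (Ssum G T \<chi>) \<le> sqrt (fact m * ffr n m)"
      by (rule main_bound[OF grp assms(2,3)])
    have m2: "2 * m \<le> n + 2" using assms(6) by linarith
    show ?thesis using H TU(3) cT m2 chT by blast
  qed
  have "cmod (fourier_1S n G \<chi>) = (1 / real n ^ n) * (fact (n - m) * cmod (Ssum G T \<chi>))"
    unfolding four by (simp add: norm_mult norm_divide norm_power)
  also have "\<dots> \<le> (1 / real n ^ n) * (fact (n - m) * sqrt (fact m * ffr n m))"
    using bound by (intro mult_left_mono) auto
  also have "fact (n - m) * sqrt (fact m * ffr n m) = fact n / sqrt (real (n choose m))"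
  proof -
    define a where "a = (fact m :: real)"
    define b where "b = (fact (n - m) :: real)"
    define F where "F = ffr n m"
    have a0: "a > 0" and b0: "b > 0" unfolding a_def b_def by auto
    have F0: "F \<ge> 0" unfolding F_def by (rule ffr_nonneg)
    have fn: "fact n = F * b" unfolding F_def b_def using ffr_fact[OF mn] by simp
    have fn': "F * fact (n - m) = fact n" unfolding F_def using ffr_fact[OF mn] by simp
    have bin: "real (n choose m) = F * b / (a * b)"
      unfolding a_def b_def fn' by (rule binomial_fact[OF mn])
    have bpos: "real (n choose m) > 0" using mn by simp
    have "sqrt (real (n choose m)) * (b * sqrt (a * F)) = b * sqrt (real (n choose m) * (a * F))"
      by (simp add: real_sqrt_mult)
    also have "real (n choose m) * (a * F) = F * F" unfolding bin using a0 b0 by (simp add: field_simps)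
    also have "b * sqrt (F * F) = fact n" using F0 fn by simp
    finally have "sqrt (real (n choose m)) * (b * sqrt (a * F)) = fact n" .
    then show ?thesis unfolding a_def b_def F_def using bpos by (simp add: field_simps)
  qed
  also have "(1 / real n ^ n) * (fact n / sqrt (real (n choose m))) = 1 / sqrt (real (n choose m)) * (fact n / real n ^ n)"
    by (simp add: divide_inverse ac_simps)
  finally show ?thesis .
qed

end
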